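(* Let $x_1,\dots,x_n\in\mathbb{R}^2$ satisfy $x_i\prec x_j$ whenever $i<j$, let $E=\{x_1,\dots,x_n\}$ and $2\le p\le n$. Then the optimal value of the Max-Min $p$-dispersion problem in $E$ equals $$\max_{1\le i_1<\dots<i_p\le n}\ \min_{j\in\{1,\dots,p-1\}}d_{i_j,i_{j+1}},$$ and the optimal value of the Max-Sum-Min $p$-dispersion problem in $E$ equals $$\max_{1\le i_1<\dots<i_p\le n}\ \sum_{j=1}^{p}m_j,\quad\text{where } m_1=d_{i_1,i_2},\ m_p=d_{i_{p-1},i_p},\ m_j=\min(d_{i_j,i_{j+1}},d_{i_j,i_{j-1}})\text{ for }1<j<p.$$
   Context: For $y=(y^1,y^2),z=(z^1,z^2)\in\mathbb{R}^2$ write $y\prec z$ iff $y^1<z^1$ and $y^2>z^2$. Fix $\alpha>0$, let $d$ be the Euclidean distance, and set $d_{ij}=d(x_i,x_j)^\alpha$. Let $D_p$ be the set of $p$-tuples $(z_1,\dots,z_p)\in E^p$ of pairwise distinct points. The Max-Min $p$-dispersion problem is $\max_{(z_1,\dots,z_p)\in D_p}\min_{1\le i<j\le p}d(z_i,z_j)^\alpha$; the Max-Sum-Min $p$-dispersion problem is $\max_{(z_1,\dots,z_p)\in D_p}\sum_{i=1}^{p}\min_{j\ne i}d(z_i,z_j)^\alpha$. *)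

theory Defs
  imports "HOL-Analysis.Analysis"
begin

text \<open>Points of the plane are modelled as real \<times> real; the product metric
  on real \<times> real is the Euclidean distance.\<close>

definition prec :: "real \<times> real \<Rightarrow> real \<times> real \<Rightarrow> bool" (infix "\<prec>" 50) where
  "y \<prec> z \<longleftrightarrow> fst y < fst z \<and> snd y > snd z"

definition Dp :: "(real \<times> real) set \<Rightarrow> nat \<Rightarrow> (real \<times> real) list set" where
  "Dp E p = {z. length z = p \<and> distinct z \<and> set z \<subseteq> E}"

definition maxmin_obj :: "real \<Rightarrow> nat \<Rightarrow> (real \<times> real) list \<Rightarrow> real" where
  "maxmin_obj \<alpha> p z = Min {dist (z ! i) (z ! j) powr \<alpha> | i j. i < j \<and> j < p}"

definition maxsummin_obj :: "real \<Rightarrow> nat \<Rightarrow> (real \<times> real) list \<Rightarrow> real" where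
  "maxsummin_obj \<alpha> p z = (\<Sum>i<p. Min {dist (z ! i) (z ! j) powr \<alpha> | j. j < p \<and> j \<noteq> i})"

definition maxmin_opt :: "(real \<times> real) set \<Rightarrow> real \<Rightarrow> nat \<Rightarrow> real" where
  "maxmin_opt E \<alpha> p = Max (maxmin_obj \<alpha> p ` Dp E p)"

definition maxsummin_opt :: "(real \<times> real) set \<Rightarrow> real \<Rightarrow> nat \<Rightarrow> real" where
  "maxsummin_opt E \<alpha> p = Max (maxsummin_obj \<alpha> p ` Dp E p)"

definition idx_seqs :: "nat \<Rightarrow> nat \<Rightarrow> nat list set" where
  "idx_seqs n p = {is. length is = p \<and> sorted_wrt (<) is \<and> set is \<subseteq> {1..n}}"

end

theory Submission
  imports Defs
begin

lemma mono_coord: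
  fixes x :: "nat \<Rightarrow> real \<times> real" and n :: nat
  assumes chain: "\<And>i j. 1 \<le> i \<Longrightarrow> i < j \<Longrightarrow> j \<le> n \<Longrightarrow> x i \<prec> x j"
    and "1 \<le> i" "i \<le> j" "j \<le> n"
  shows "fst (x i) \<le> fst (x j) \<and> snd (x j) \<le> snd (x i)"
proof (cases "i = j")
  case False
  then have "x i \<prec> x j" using chain assms by simp
  then show ?thesis by (auto simp: prec_def)
qed simp

lemma dist_mono:
  fixes x :: "nat \<Rightarrow> real \<times> real" and n :: nat
  assumes chain: "\<And>i j. 1 \<le> i \<Longrightarrow> i < j \<Longrightarrow> j \<le> n \<Longrightarrow> x i \<prec> x j"
    and "i \<in> {1..n}" "j \<in> {1..n}" "k \<in> {1..n}"
    and o: "i < j \<and> j \<le> k \<or> k \<le> j \<and> j < i"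
  shows "dist (x i) (x j) \<le> dist (x i) (x k)"
proof -
  have "\<bar>fst (x i) - fst (x j)\<bar> \<le> \<bar>fst (x i) - fst (x k)\<bar> \<and>
        \<bar>snd (x i) - snd (x j)\<bar> \<le> \<bar>snd (x i) - snd (x k)\<bar>"
  proof (cases "i < j \<and> j \<le> k")
    case True
    then show ?thesis using mono_coord[where x=x and n=n and i=i and j=j, OF chain] mono_coord[where x=x and n=n and i=j and j=k, OF chain] assms(2-4)
      by auto
  next
    case False
    then have "k \<le> j \<and> j < i" using o by auto
    then show ?thesis using mono_coord[where x=x and n=n and i=k and j=j, OF chain] mono_coord[where x=x and n=n and i=j and j=i, OF chain] assms(2-4)
      by auto
  qed
  then show ?thesis unfolding dist_prod_def dist_real_def
    by (intro real_sqrt_le_mono add_mono power_mono) auto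
qed

lemma dpow_mono:
  fixes x :: "nat \<Rightarrow> real \<times> real" and n :: nat
  assumes chain: "\<And>i j. 1 \<le> i \<Longrightarrow> i < j \<Longrightarrow> j \<le> n \<Longrightarrow> x i \<prec> x j"
    and "i \<in> {1..n}" "j \<in> {1..n}" "k \<in> {1..n}" "\<alpha> > 0"
    and o: "i < j \<and> j \<le> k \<or> k \<le> j \<and> j < i"
  shows "dist (x i) (x j) powr \<alpha> \<le> dist (x i) (x k) powr \<alpha>"
  using dist_mono[OF assms(1-4) o] assms(5) by (intro powr_mono2) auto


lemma D_mono:
  fixes x :: "nat \<Rightarrow> real \<times> real" and n :: nat
  assumes chain: "\<And>i j. 1 \<le> i \<Longrightarrow> i < j \<Longrightarrow> j \<le> n \<Longrightarrow> x i \<prec> x j"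
    and ks: "ks \<in> idx_seqs n p" and al: "\<alpha> > 0" and abc: "a < p" "b < p" "c < p"
    and o: "a < b \<and> b \<le> c \<or> c \<le> b \<and> b < a"
  shows "dist (x (ks!a)) (x (ks!b)) powr \<alpha> \<le> dist (x (ks!a)) (x (ks!c)) powr \<alpha>"
proof -
  have len: "length ks = p" and sw: "sorted_wrt (<) ks" and sub: "set ks \<subseteq> {1..n}"
    using ks by (auto simp: idx_seqs_def)
  have mem: "ks ! k \<in> {1..n}" if "k < p" for k using that len sub nth_mem by blast
  have lt: "ks ! k < ks ! l" if "k < l" "l < p" for k l
    using sorted_wrt_nth_less[OF sw that(1)] that len by simp
  have le: "ks ! k \<le> ks ! l" if "k \<le> l" "l < p" for k l
    using lt[of k l] that by (cases "k = l") auto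
  have "ks!a < ks!b \<and> ks!b \<le> ks!c \<or> ks!c \<le> ks!b \<and> ks!b < ks!a"
    using o lt le abc by blast
  then show ?thesis
    using dpow_mono[where x=x and n=n, OF chain mem[OF abc(1)] mem[OF abc(2)] mem[OF abc(3)] al]
    by blast
qed

lemma maxmin_sorted:
  fixes x :: "nat \<Rightarrow> real \<times> real" and n :: nat
  assumes chain: "\<And>i j. 1 \<le> i \<Longrightarrow> i < j \<Longrightarrow> j \<le> n \<Longrightarrow> x i \<prec> x j"
    and ks: "ks \<in> idx_seqs n p" and al: "\<alpha> > 0" and p2: "2 \<le> p"
  shows "maxmin_obj \<alpha> p (map x ks) =
     Min ((\<lambda>j. dist (x (ks ! j)) (x (ks ! (j + 1))) powr \<alpha>) ` {0..<p - 1})"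
proof -
  have len: "length ks = p" using ks by (auto simp: idx_seqs_def)
  define D where "D = (\<lambda>a b. dist (x (ks!a)) (x (ks!b)) powr \<alpha>)"
  have S: "{dist (map x ks ! i) (map x ks ! j) powr \<alpha> | i j. i < j \<and> j < p}
      = {D i j | i j. i < j \<and> j < p}"
    using len by (force simp: D_def)
  define T where "T = (\<lambda>j. D j (j+1)) ` {0..<p - 1}"
  have finS: "finite {D i j | i j. i < j \<and> j < p}"
  proof (rule finite_subset[OF _ finite_image_set2[of "\<lambda>i. i < p" "\<lambda>j. j < p" D]])
    show "{D i j |i j. i < j \<and> j < p} \<subseteq> {D x y |x y. x < p \<and> y < p}"
      by (auto dest: less_trans)
  qed auto
  have finT: "finite T" "T \<noteq> {}" using p2 by (auto simp: T_def)
  have "Min {D i j | i j. i < j \<and> j < p} = Min T"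
  proof (rule Min_eqI[OF finS])
    fix y assume "y \<in> {D i j | i j. i < j \<and> j < p}"
    then obtain i j where y: "y = D i j" "i < j" "j < p" by auto
    have "Min T \<le> D i (i+1)" using finT y by (intro Min_le) (auto simp: T_def)
    also have "D i (i+1) \<le> D i j" unfolding D_def
      by (rule D_mono[OF chain ks al]) (use y in auto)
    finally show "Min T \<le> y" using y by simp
  next
    have "Min T \<in> T" using finT by (rule Min_in)
    then obtain k where k: "Min T = D k (k+1)" "k < p - 1" by (auto simp: T_def)
    then show "Min T \<in> {D i j | i j. i < j \<and> j < p}"
    proof -
      have "k + 1 < p" using k(2) by simp
      then have "D k (k+1) \<in> {D i j | i j. i < j \<and> j < p}"
        unfolding mem_Collect_eq by (intro exI[of _ k] exI[of _ "k+1"]) simp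
      then show ?thesis using k(1) by simp
    qed
  qed
  then show ?thesis unfolding maxmin_obj_def S T_def D_def by simp
qed

lemma summin_sorted:
  fixes x :: "nat \<Rightarrow> real \<times> real" and n :: nat
  assumes chain: "\<And>i j. 1 \<le> i \<Longrightarrow> i < j \<Longrightarrow> j \<le> n \<Longrightarrow> x i \<prec> x j"
    and ks: "ks \<in> idx_seqs n p" and al: "\<alpha> > 0" and p2: "2 \<le> p"
  defines "d \<equiv> (\<lambda>i j. dist (x i) (x j) powr \<alpha>)"
  shows "maxsummin_obj \<alpha> p (map x ks) =
     (\<Sum>j<p. (if j = 0 then d (ks ! 0) (ks ! 1)
                    else if j = p - 1 then d (ks ! (p - 2)) (ks ! (p - 1))
                    else min (d (ks ! j) (ks ! (j + 1))) (d (ks ! j) (ks ! (j - 1)))))"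
  unfolding maxsummin_obj_def
proof (rule sum.cong[OF refl])
  fix i assume "i \<in> {..<p}"
  then have i: "i < p" by simp
  have len: "length ks = p" using ks by (auto simp: idx_seqs_def)
  define D where "D = (\<lambda>a b. dist (x (ks!a)) (x (ks!b)) powr \<alpha>)"
  have Dm: "D a b \<le> D a c" if "a < p" "b < p" "c < p" "a < b \<and> b \<le> c \<or> c \<le> b \<and> b < a" for a b c
    unfolding D_def by (rule D_mono[OF chain ks al that])
  have Dc: "D a b = D b a" for a b unfolding D_def by (simp add: dist_commute)
  have A: "{dist (map x ks ! i) (map x ks ! j) powr \<alpha> | j. j < p \<and> j \<noteq> i} = D i ` {j. j < p \<and> j \<noteq> i}"
  proof -
    have e: "dist (map x ks ! i) (map x ks ! j) powr \<alpha> = D i j" if "j < p" for j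
      using that len i by (simp add: D_def)
    show ?thesis by (auto simp: image_def e) (metis e)
  qed
  have finA: "finite (D i ` {j. j < p \<and> j \<noteq> i})" by simp
  have "Min (D i ` {j. j < p \<and> j \<noteq> i}) =
     (if i = 0 then D 0 1 else if i = p - 1 then D (p - 2) (p - 1)
      else min (D i (i + 1)) (D i (i - 1)))"
  proof (rule Min_eqI[OF finA])
    fix y assume "y \<in> D i ` {j. j < p \<and> j \<noteq> i}"
    then obtain j where y: "y = D i j" "j < p" "j \<noteq> i" by auto
    show "(if i = 0 then D 0 1 else if i = p - 1 then D (p - 2) (p - 1)
      else min (D i (i + 1)) (D i (i - 1))) \<le> y"
    proof (cases "i = 0")
      case True then show ?thesis using y p2 Dm[of 0 1 j] by auto
    next
      case F: False
      show ?thesis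
      proof (cases "i = p - 1")
        case True
        then have "j \<le> p - 2" "p - 2 < p - 1" using y p2 by auto
        then have "D (p-1) (p-2) \<le> D (p-1) j" using y p2 Dm[of "p-1" "p-2" j] by auto
        then show ?thesis using True F Dc[of "p-2" "p-1"] y by auto
      next
        case False
        then have "i + 1 < p" using i by auto
        have "D i (i+1) \<le> D i j \<or> D i (i-1) \<le> D i j"
        proof (cases "j < i")
          case True
          then have "j \<le> i - 1" "i - 1 < i" using F by auto
          then show ?thesis using Dm[of i "i-1" j] i y by auto
        next
          case False
          then have "i < i + 1" "i + 1 \<le> j" using y by auto
          then show ?thesis using Dm[of i "i+1" j] i y by auto
        qed
        then show ?thesis using y F False by (auto simp: min_le_iff_disj)
      qed
    qed
  next
    show "(if i = 0 then D 0 1 else if i = p - 1 then D (p - 2) (p - 1)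
      else min (D i (i + 1)) (D i (i - 1))) \<in> D i ` {j. j < p \<and> j \<noteq> i}"
      using i p2 Dc[of "p-2" "p-1"] by (auto simp: min_def)
  qed
  then show "Min {dist (map x ks ! i) (map x ks ! j) powr \<alpha> | j. j < p \<and> j \<noteq> i} =
     (if i = 0 then d (ks ! 0) (ks ! 1)
                    else if i = p - 1 then d (ks ! (p - 2)) (ks ! (p - 1))
                    else min (d (ks ! i) (ks ! (i + 1))) (d (ks ! i) (ks ! (i - 1))))"
    unfolding A by (simp add: D_def d_def)
qed


lemma maxmin_set:
  assumes "distinct z" "length z = p"
  shows "maxmin_obj \<alpha> p z = Min {dist a b powr \<alpha> | a b. a \<in> set z \<and> b \<in> set z \<and> a \<noteq> b}"
proof -
  have "{dist (z ! i) (z ! j) powr \<alpha> | i j. i < j \<and> j < p} =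
        {dist a b powr \<alpha> | a b. a \<in> set z \<and> b \<in> set z \<and> a \<noteq> b}"
  proof (intro set_eqI iffI)
    fix y assume "y \<in> {dist (z ! i) (z ! j) powr \<alpha> | i j. i < j \<and> j < p}"
    then obtain i j where y: "y = dist (z ! i) (z ! j) powr \<alpha>" "i < j" "j < p" by auto
    have "z ! i \<noteq> z ! j" using y assms by (simp add: nth_eq_iff_index_eq)
    moreover have "z ! i \<in> set z" "z ! j \<in> set z" using y assms by auto
    ultimately show "y \<in> {dist a b powr \<alpha> | a b. a \<in> set z \<and> b \<in> set z \<and> a \<noteq> b}"
      using y by blast
  next
    fix y assume "y \<in> {dist a b powr \<alpha> | a b. a \<in> set z \<and> b \<in> set z \<and> a \<noteq> b}"
    then obtain a b where y: "y = dist a b powr \<alpha>" "a \<in> set z" "b \<in> set z" "a \<noteq> b" by auto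
    then obtain i j where ij: "a = z ! i" "b = z ! j" "i < p" "j < p"
      using assms by (auto simp: in_set_conv_nth)
    then have "i \<noteq> j" using y by auto
    then show "y \<in> {dist (z ! i) (z ! j) powr \<alpha> | i j. i < j \<and> j < p}"
    proof (cases "i < j")
      case True then show ?thesis using y ij by blast
    next
      case False
      then have "j < i" using \<open>i \<noteq> j\<close> by simp
      moreover have "y = dist (z ! j) (z ! i) powr \<alpha>" using y ij by (simp add: dist_commute)
      ultimately show ?thesis using ij by blast
    qed
  qed
  then show ?thesis unfolding maxmin_obj_def by simp
qed

lemma summin_set:
  assumes "distinct z" "length z = p"
  shows "maxsummin_obj \<alpha> p z = (\<Sum>a\<in>set z. Min {dist a b powr \<alpha> | b. b \<in> set z \<and> b \<noteq> a})"
proof -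
  define g where "g = (\<lambda>a. Min {dist a b powr \<alpha> | b. b \<in> set z \<and> b \<noteq> a})"
  have inner: "{dist (z ! i) (z ! j) powr \<alpha> | j. j < p \<and> j \<noteq> i} = 
     {dist (z ! i) b powr \<alpha> | b. b \<in> set z \<and> b \<noteq> z ! i}" if i: "i < p" for i
  proof (intro set_eqI iffI)
    fix y assume "y \<in> {dist (z ! i) (z ! j) powr \<alpha> | j. j < p \<and> j \<noteq> i}"
    then obtain j where y: "y = dist (z ! i) (z ! j) powr \<alpha>" "j < p" "j \<noteq> i" by auto
    have "z ! j \<noteq> z ! i" using y assms i by (simp add: nth_eq_iff_index_eq)
    moreover have "z ! j \<in> set z" using y assms by auto
    ultimately show "y \<in> {dist (z ! i) b powr \<alpha> | b. b \<in> set z \<and> b \<noteq> z ! i}"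
      using y by blast
  next
    fix y assume "y \<in> {dist (z ! i) b powr \<alpha> | b. b \<in> set z \<and> b \<noteq> z ! i}"
    then obtain b where y: "y = dist (z ! i) b powr \<alpha>" "b \<in> set z" "b \<noteq> z ! i" by auto
    then obtain j where j: "b = z ! j" "j < p" using assms by (auto simp: in_set_conv_nth)
    then have "j \<noteq> i" using y by auto
    then show "y \<in> {dist (z ! i) (z ! j) powr \<alpha> | j. j < p \<and> j \<noteq> i}" using y j by blast
  qed
  have "maxsummin_obj \<alpha> p z = (\<Sum>i<p. g (z ! i))"
    unfolding maxsummin_obj_def g_def using inner by simp
  also have "\<dots> = sum g (nth z ` {..<p})"
    by (rule sum.reindex[symmetric, unfolded comp_def]) (use assms in \<open>auto intro: inj_on_nth\<close>)
  also have "nth z ` {..<p} = set z" using assms by (auto simp: set_conv_nth)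
  finally show ?thesis unfolding g_def .
qed


theorem proposition3:
  fixes x :: "nat \<Rightarrow> real \<times> real" and n p :: nat and \<alpha> :: real
  assumes alpha: "\<alpha> > 0"
    and chain: "\<And>i j. 1 \<le> i \<Longrightarrow> i < j \<Longrightarrow> j \<le> n \<Longrightarrow> x i \<prec> x j"
    and p: "2 \<le> p" "p \<le> n"
  defines "E \<equiv> x ` {1..n}"
    and "d \<equiv> (\<lambda>i j. dist (x i) (x j) powr \<alpha>)"
  shows "maxmin_opt E \<alpha> p =
           Max ((\<lambda>is. Min ((\<lambda>j. d (is ! j) (is ! (j + 1))) ` {0..<p - 1})) ` idx_seqs n p)
       \<and> maxsummin_opt E \<alpha> p =
           Max ((\<lambda>is. \<Sum>j<p.
                   (if j = 0 then d (is ! 0) (is ! 1)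
                    else if j = p - 1 then d (is ! (p - 2)) (is ! (p - 1))
                    else min (d (is ! j) (is ! (j + 1))) (d (is ! j) (is ! (j - 1)))))
                ` idx_seqs n p)"
proof -
  define F1 where "F1 = (\<lambda>ks. Min ((\<lambda>j. d (ks ! j) (ks ! (j + 1))) ` {0..<p - 1}))"
  define F2 where "F2 = (\<lambda>ks. \<Sum>j<p.
                   (if j = 0 then d (ks ! 0) (ks ! 1)
                    else if j = p - 1 then d (ks ! (p - 2)) (ks ! (p - 1))
                    else min (d (ks ! j) (ks ! (j + 1))) (d (ks ! j) (ks ! (j - 1)))))"
  have inj: "inj_on x {1..n}"
  proof (rule inj_onI)
    fix i j assume ij: "i \<in> {1..n}" "j \<in> {1..n}" "x i = x j"
    show "i = j"
    proof (rule ccontr)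
      assume "i \<noteq> j"
      then have "i < j \<or> j < i" by auto
      then have "x i \<prec> x j \<or> x j \<prec> x i" using chain ij(1,2) by auto
      then show False using ij(3) by (auto simp: prec_def)
    qed
  qed
  have fwd: "map x ks \<in> Dp E p \<and> maxmin_obj \<alpha> p (map x ks) = F1 ks
     \<and> maxsummin_obj \<alpha> p (map x ks) = F2 ks" if ks: "ks \<in> idx_seqs n p" for ks
  proof (intro conjI)
    have len: "length ks = p" and sw: "sorted_wrt (<) ks" and sub: "set ks \<subseteq> {1..n}"
      using ks by (auto simp: idx_seqs_def)
    have "distinct ks" using sw by (simp add: strict_sorted_iff)
    then have "distinct (map x ks)" using inj_on_subset[OF inj sub] by (simp add: distinct_map)
    then show "map x ks \<in> Dp E p" using len sub by (auto simp: Dp_def E_def)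
    show "maxmin_obj \<alpha> p (map x ks) = F1 ks"
      unfolding F1_def d_def by (rule maxmin_sorted[OF chain ks alpha p(1)])
    show "maxsummin_obj \<alpha> p (map x ks) = F2 ks"
      unfolding F2_def d_def by (rule summin_sorted[OF chain ks alpha p(1)])
  qed
  have bwd: "\<exists>ks \<in> idx_seqs n p. maxmin_obj \<alpha> p z = F1 ks \<and> maxsummin_obj \<alpha> p z = F2 ks"
    if z: "z \<in> Dp E p" for z
  proof -
    have zl: "length z = p" "distinct z" "set z \<subseteq> E" using z by (auto simp: Dp_def)
    define I where "I = {i \<in> {1..n}. x i \<in> set z}"
    define ks where "ks = sorted_list_of_set I"
    have finI: "finite I" by (simp add: I_def)
    have setks: "set ks = I" using finI by (simp add: ks_def)
    have xI: "x ` I = set z" using zl(3) by (auto simp: I_def E_def)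
    have "I \<subseteq> {1..n}" by (auto simp: I_def)
    then have "card (x ` I) = card I" using card_image[OF inj_on_subset[OF inj]] by blast
    then have "card I = p"
      using xI zl distinct_card[of z] by simp
    then have lenks: "length ks = p" by (simp add: ks_def)
    have swks: "sorted_wrt (<) ks" by (simp add: ks_def strict_sorted_iff)
    have ksin: "ks \<in> idx_seqs n p" using lenks swks setks by (auto simp: idx_seqs_def I_def)
    have fw: "map x ks \<in> Dp E p" "maxmin_obj \<alpha> p (map x ks) = F1 ks"
      "maxsummin_obj \<alpha> p (map x ks) = F2 ks" using fwd[OF ksin] by auto
    have dm: "distinct (map x ks)" "length (map x ks) = p" using fw(1) by (auto simp: Dp_def)
    have sm: "set (map x ks) = set z" using setks xI by simp
    have "maxmin_obj \<alpha> p z = F1 ks"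
      using maxmin_set[OF zl(2,1)] maxmin_set[OF dm] fw(2) sm by simp
    moreover have "maxsummin_obj \<alpha> p z = F2 ks"
      using summin_set[OF zl(2,1)] summin_set[OF dm] fw(3) sm by simp
    ultimately show ?thesis using ksin by blast
  qed
  have im1: "maxmin_obj \<alpha> p ` Dp E p = F1 ` idx_seqs n p"
  proof
    show "maxmin_obj \<alpha> p ` Dp E p \<subseteq> F1 ` idx_seqs n p" using bwd by fastforce
    show "F1 ` idx_seqs n p \<subseteq> maxmin_obj \<alpha> p ` Dp E p"
    proof
      fix y assume "y \<in> F1 ` idx_seqs n p"
      then obtain ks where "ks \<in> idx_seqs n p" "y = F1 ks" by auto
      then show "y \<in> maxmin_obj \<alpha> p ` Dp E p" using fwd[of ks] by (metis image_eqI)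
    qed
  qed
  have im2: "maxsummin_obj \<alpha> p ` Dp E p = F2 ` idx_seqs n p"
  proof
    show "maxsummin_obj \<alpha> p ` Dp E p \<subseteq> F2 ` idx_seqs n p" using bwd by fastforce
    show "F2 ` idx_seqs n p \<subseteq> maxsummin_obj \<alpha> p ` Dp E p"
    proof
      fix y assume "y \<in> F2 ` idx_seqs n p"
      then obtain ks where "ks \<in> idx_seqs n p" "y = F2 ks" by auto
      then show "y \<in> maxsummin_obj \<alpha> p ` Dp E p" using fwd[of ks] by (metis image_eqI)
    qed
  qed
  show ?thesis unfolding maxmin_opt_def maxsummin_opt_def im1 im2 F1_def F2_def by simp
qed

end
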